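(* Let $T$ be a text of length $n$ with suffix tree $\mathcal T$, and let $d=\lceil\log_2 n\rceil$. The total number of heavy Weiner links whose source is a w-special node of $\mathcal T$ is $O(n/d)$.
   Context: For a node $v$ of the suffix tree $\mathcal T$ whose root-to-node path spells the string $p$, and a symbol $c$ such that $cp$ occurs in $T$, the Weiner link $\mathrm{wlink}(v,c)$ goes from $v$ (its source) to the locus $u$ of $cp$ in $\mathcal T$ (the highest node whose path label has $cp$ as a prefix); $c$ is its label. A Weiner link is heavy if its target node has at least $d$ leaf descendants, and light otherwise. A node $v$ is w-special if at least two heavy Weiner links have $v$ as source. *)

theory Defs
  imports Complex_Main "HOL-Library.Sublist"
begin

text \<open>Texts are lists over the alphabet nat (any alphabet embeds). Nodes of the
suffix tree are identified with their path labels (strings).\<close>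

definition right_maximal :: "nat list \<Rightarrow> nat list \<Rightarrow> bool" where
  "right_maximal T p \<longleftrightarrow>
     (\<exists>a b. a \<noteq> b \<and> sublist (p @ [a]) T \<and> sublist (p @ [b]) T)"

text \<open>Nodes of the suffix tree: the root, the internal (branching) nodes, and the leaves
(non-empty suffixes of T; T is assumed to end with a unique terminator).\<close>
definition st_node :: "nat list \<Rightarrow> nat list \<Rightarrow> bool" where
  "st_node T p \<longleftrightarrow> p = [] \<or> right_maximal T p \<or> (p \<noteq> [] \<and> suffix p T)"

definition st_leaf :: "nat list \<Rightarrow> nat list \<Rightarrow> bool" where
  "st_leaf T p \<longleftrightarrow> st_node T p \<and> \<not> (\<exists>q. st_node T q \<and> strict_prefix p q)"

definition leaf_desc :: "nat list \<Rightarrow> nat list \<Rightarrow> nat" where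
  "leaf_desc T p = card {q. st_leaf T q \<and> prefix p q}"

definition locus :: "nat list \<Rightarrow> nat list \<Rightarrow> nat list" where
  "locus T s = (SOME u. st_node T u \<and> prefix s u \<and>
                  (\<forall>w. st_node T w \<and> prefix s w \<longrightarrow> length u \<le> length w))"

text \<open>Weiner link wlink(v,c), represented by the pair (v,c).\<close>
definition wlink :: "nat list \<Rightarrow> nat list \<Rightarrow> nat \<Rightarrow> bool" where
  "wlink T v c \<longleftrightarrow> st_node T v \<and> sublist (c # v) T"

definition heavy_wlink :: "nat list \<Rightarrow> nat \<Rightarrow> nat list \<Rightarrow> nat \<Rightarrow> bool" where
  "heavy_wlink T d v c \<longleftrightarrow> wlink T v c \<and> leaf_desc T (locus T (c # v)) \<ge> d"

definition w_special :: "nat list \<Rightarrow> nat \<Rightarrow> nat list \<Rightarrow> bool" where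
  "w_special T d v \<longleftrightarrow> st_node T v \<and>
     (\<exists>c1 c2. c1 \<noteq> c2 \<and> heavy_wlink T d v c1 \<and> heavy_wlink T d v c2)"

definition unique_terminator :: "nat list \<Rightarrow> bool" where
  "unique_terminator T \<longleftrightarrow> T \<noteq> [] \<and> last T \<notin> set (butlast T)"

end

theory Submission
  imports Defs
begin

definition occ :: "nat list \<Rightarrow> nat list \<Rightarrow> nat list set" where
  "occ T w = {q. suffix q T \<and> prefix w q}"

lemma occ_sub: "occ T w \<subseteq> set (suffixes T)"
  by (auto simp: occ_def)

lemma finite_occ[simp]: "finite (occ T w)"
  by (rule finite_subset[OF occ_sub]) auto

lemma suffix_eq_len: "suffix a T \<Longrightarrow> suffix b T \<Longrightarrow> length a = length b \<Longrightarrow> a = b"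
  by (metis suffix_length_suffix order_refl suffix_order.antisym)

lemma occ_mono:
  assumes "suffix u u'"
  shows "card (occ T u') \<le> card (occ T u)"
proof -
  obtain x where x: "u' = x @ u" using assms by (auto simp: suffix_def)
  let ?f = "drop (length x)"
  have "inj_on ?f (occ T u')"
  proof (rule inj_onI)
    fix a b assume a: "a \<in> occ T u'" and b: "b \<in> occ T u'" and e: "?f a = ?f b"
    have la: "length a \<ge> length x" "length b \<ge> length x" using a b x
      by (auto simp: occ_def prefix_def)
    hence "length a = length b" using e by (metis add_diff_inverse_nat diff_diff_cancel length_drop not_less)
    thus "a = b" using a b suffix_eq_len by (auto simp: occ_def)
  qed
  moreover have "?f ` occ T u' \<subseteq> occ T u"
  proof
    fix y assume "y \<in> ?f ` occ T u'"
    then obtain a where a: "a \<in> occ T u'" and y: "y = ?f a" by auto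
    from a x obtain r where "a = x @ u @ r" by (auto simp: occ_def prefix_def)
    hence "y = u @ r" using y by simp
    moreover have "suffix y T" using a y suffix_drop[of "length x" a] suffix_order.trans by (auto simp: occ_def)
    ultimately show "y \<in> occ T u" by (auto simp: occ_def)
  qed
  ultimately show ?thesis by (metis card_inj_on_le finite_occ)
qed

lemma occ_split:
  assumes "finite C"
  shows "(\<Sum>c\<in>C. card (occ T (c # w))) \<le> card (occ T w)"
proof -
  have "(\<Sum>c\<in>C. card (occ T (c # w))) = card (\<Union>c\<in>C. occ T (c # w))"
    apply (rule card_UN_disjoint[symmetric])
    using assms apply simp apply simp
    by (auto simp: occ_def prefix_def)
  also have "\<dots> \<le> card (occ T w)"
  proof (rule card_inj_on_le)
    show "inj_on tl (\<Union>c\<in>C. occ T (c # w))"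
    proof (rule inj_onI)
      fix a b assume a: "a \<in> (\<Union>c\<in>C. occ T (c # w))" and b: "b \<in> (\<Union>c\<in>C. occ T (c # w))"
        and e: "tl a = tl b"
      have "a \<noteq> []" "b \<noteq> []" using a b by (auto simp: occ_def prefix_def)
      hence "length a = length b" using e by (metis length_tl diff_Suc_1 length_Suc_conv list.exhaust)
      thus "a = b" using a b suffix_eq_len by (auto simp: occ_def)
    qed
    show "tl ` (\<Union>c\<in>C. occ T (c # w)) \<subseteq> occ T w"
      by (auto simp: occ_def prefix_def intro: suffix_order.trans[OF suffix_tl])
  qed simp
  finally show ?thesis .
qed

lemma sublist_tr: "sublist a b \<Longrightarrow> sublist b c \<Longrightarrow> sublist a c"
proof -
  assume "sublist a b" "sublist b c"
  then obtain p1 s1 p2 s2 where "b = p1 @ a @ s1" "c = p2 @ b @ s2" by (auto simp: sublist_def)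
  hence "c = (p2 @ p1) @ a @ (s1 @ s2)" by simp
  thus ?thesis unfolding sublist_def by blast
qed

lemma occ_ne_sublist: "occ T w \<noteq> {} \<Longrightarrow> sublist w T"
  by (auto simp: occ_def intro: sublist_tr[OF prefix_imp_sublist suffix_imp_sublist])

lemma heavy_sublist: "1 \<le> d \<Longrightarrow> d \<le> card (occ T w) \<Longrightarrow> sublist w T"
proof -
  assume "1 \<le> d" "d \<le> card (occ T w)"
  hence "occ T w \<noteq> {}" by auto
  thus ?thesis by (rule occ_ne_sublist)
qed

definition KK :: "nat list \<Rightarrow> nat \<Rightarrow> nat list \<Rightarrow> nat set" where
  "KK T d v = {c. d \<le> card (occ T (c # v))}"

definition VV :: "nat list \<Rightarrow> nat \<Rightarrow> nat list set" where
  "VV T d = {v. 2 \<le> card (KK T d v)}"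

definition Phi :: "nat list \<Rightarrow> nat \<Rightarrow> nat list \<Rightarrow> nat" where
  "Phi T d w = (\<Sum>v\<in>{v\<in>VV T d. suffix w v}. card (KK T d v) - 1)"

lemma KK_sub: "1 \<le> d \<Longrightarrow> KK T d v \<subseteq> set T"
proof
  fix c assume "1 \<le> d" "c \<in> KK T d v"
  hence "sublist (c # v) T" using heavy_sublist by (auto simp: KK_def)
  from set_mono_sublist[OF this] show "c \<in> set T" by simp
qed

lemma finite_KK: "1 \<le> d \<Longrightarrow> finite (KK T d v)"
  by (rule finite_subset[OF KK_sub]) auto

lemma VV_sub: "1 \<le> d \<Longrightarrow> VV T d \<subseteq> set (sublists T)"
proof
  fix v assume d: "1 \<le> d" and "v \<in> VV T d"
  hence "KK T d v \<noteq> {}" by (auto simp: VV_def)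
  then obtain c where "c \<in> KK T d v" by auto
  hence "sublist (c # v) T" using d heavy_sublist by (auto simp: KK_def)
  moreover have "sublist v (c # v)" using sublist_append_leftI[of v "[c]"] by simp
  ultimately have "sublist v T" using sublist_tr by blast
  thus "v \<in> set (sublists T)" by simp
qed

lemma finite_VV: "1 \<le> d \<Longrightarrow> finite (VV T d)"
  by (rule finite_subset[OF VV_sub]) auto

lemma suffix_cons_split:
  assumes "suffix w v" "v \<noteq> w"
  shows "\<exists>c. suffix (c # w) v"
proof -
  obtain x where x: "v = x @ w" using assms by (auto simp: suffix_def)
  hence "x \<noteq> []" using assms by auto
  hence "x = butlast x @ [last x]" by simp
  hence "v = butlast x @ (last x # w)" using x by (metis append.assoc append_Cons append_Nil)
  thus ?thesis unfolding suffix_def by blast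
qed

lemma set_decomp:
  assumes d: "1 \<le> d"
  shows "{v\<in>VV T d. suffix w v} = ({w} \<inter> VV T d) \<union> (\<Union>c\<in>KK T d w. {v\<in>VV T d. suffix (c # w) v})"
proof (rule set_eqI, rule iffI)
  fix v assume v: "v \<in> {v\<in>VV T d. suffix w v}"
  show "v \<in> ({w} \<inter> VV T d) \<union> (\<Union>c\<in>KK T d w. {v\<in>VV T d. suffix (c # w) v})"
  proof (cases "v = w")
    case True thus ?thesis using v by auto
  next
    case False
    then obtain c where c: "suffix (c # w) v" using v suffix_cons_split by blast
    have "KK T d v \<noteq> {}" using v by (auto simp: VV_def)
    then obtain c' where c': "d \<le> card (occ T (c' # v))" by (auto simp: KK_def)
    have "suffix (c # w) (c' # v)" using c by (auto simp: suffix_def)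
    hence "card (occ T (c' # v)) \<le> card (occ T (c # w))" by (rule occ_mono)
    hence "c \<in> KK T d w" using c' by (auto simp: KK_def)
    thus ?thesis using v c by auto
  qed
next
  fix v assume "v \<in> ({w} \<inter> VV T d) \<union> (\<Union>c\<in>KK T d w. {v\<in>VV T d. suffix (c # w) v})"
  thus "v \<in> {v\<in>VV T d. suffix w v}"
    by (auto dest: suffix_ConsD)
qed

lemma phi_decomp:
  assumes d: "1 \<le> d"
  shows "Phi T d w = (if w \<in> VV T d then card (KK T d w) - 1 else 0) + (\<Sum>c\<in>KK T d w. Phi T d (c # w))"
proof -
  let ?f = "\<lambda>v. card (KK T d v) - 1"
  have fin: "finite (VV T d)" using finite_VV[OF d] .
  have disj1: "({w} \<inter> VV T d) \<inter> (\<Union>c\<in>KK T d w. {v\<in>VV T d. suffix (c # w) v}) = {}"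
  proof (rule ccontr)
    assume "\<not> ?thesis"
    then obtain c :: nat where "suffix (c # w) w" by auto
    from suffix_length_le[OF this] show False by simp
  qed
  have "Phi T d w = sum ?f (({w} \<inter> VV T d) \<union> (\<Union>c\<in>KK T d w. {v\<in>VV T d. suffix (c # w) v}))"
    unfolding Phi_def by (rule arg_cong[where f="sum ?f", OF set_decomp[OF d]])
  also have "\<dots> = sum ?f ({w} \<inter> VV T d) + sum ?f (\<Union>c\<in>KK T d w. {v\<in>VV T d. suffix (c # w) v})"
  proof (rule sum.union_disjoint)
    show "finite ({w} \<inter> VV T d)" using fin by simp
    show "finite (\<Union>c\<in>KK T d w. {v\<in>VV T d. suffix (c # w) v})"
      by (rule finite_subset[OF _ fin]) blast
  qed (rule disj1)
  also have "sum ?f (\<Union>c\<in>KK T d w. {v\<in>VV T d. suffix (c # w) v}) = (\<Sum>c\<in>KK T d w. Phi T d (c # w))"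
    unfolding Phi_def
  proof (rule sum.UNION_disjoint)
    show "finite (KK T d w)" using finite_KK[OF d] .
    show "\<forall>c\<in>KK T d w. finite {v \<in> VV T d. suffix (c # w) v}"
      by (intro ballI, rule finite_subset[OF _ fin]) blast
    show "\<forall>c\<in>KK T d w. \<forall>c'\<in>KK T d w. c \<noteq> c' \<longrightarrow>
          {v \<in> VV T d. suffix (c # w) v} \<inter> {v \<in> VV T d. suffix (c' # w) v} = {}"
    proof (intro ballI impI)
      fix c c' :: nat assume "c \<noteq> c'"
      show "{v \<in> VV T d. suffix (c # w) v} \<inter> {v \<in> VV T d. suffix (c' # w) v} = {}"
      proof (rule ccontr)
        assume "\<not> ?thesis"
        then obtain v :: "nat list" where "suffix (c # w) v" "suffix (c' # w) v" by auto
        hence "c # w = c' # w" using suffix_eq_len[of "c # w" v "c' # w"] by simp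
        thus False using \<open>c \<noteq> c'\<close> by simp
      qed
    qed
  qed
  also have "sum ?f ({w} \<inter> VV T d) = (if w \<in> VV T d then card (KK T d w) - 1 else 0)"
    by (cases "w \<in> VV T d") simp_all
  finally show ?thesis .
qed

lemma phi_bound:
  assumes d: "1 \<le> d"
  shows "d \<le> card (occ T w) \<Longrightarrow> d * (Phi T d w + 1) \<le> card (occ T w)"
proof (induction w rule: measure_induct_rule[of "\<lambda>w. length T - length w"])
  case (less w)
  let ?K = "KK T d w"
  let ?S = "\<Sum>c\<in>?K. Phi T d (c # w)"
  have finK: "finite ?K" using finite_KK[OF d] .
  have h: "d * (Phi T d (c # w) + 1) \<le> card (occ T (c # w))" if c: "c \<in> ?K" for c
  proof -
    have hv: "d \<le> card (occ T (c # w))" using c by (auto simp: KK_def)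
    hence "sublist (c # w) T" using heavy_sublist d by blast
    hence "length (c # w) \<le> length T" by (rule sublist_length_le)
    hence "length T - length (c # w) < length T - length w" by simp
    thus ?thesis using less.IH hv by blast
  qed
  have "(\<Sum>c\<in>?K. d * (Phi T d (c # w) + 1)) \<le> (\<Sum>c\<in>?K. card (occ T (c # w)))"
    by (rule sum_mono) (use h in auto)
  also have "\<dots> \<le> card (occ T w)" by (rule occ_split[OF finK])
  finally have A: "d * ?S + d * card ?K \<le> card (occ T w)"
    by (simp add: sum_distrib_left sum.distrib algebra_simps)
  show ?case
  proof (cases "w \<in> VV T d")
    case True
    hence "card ?K \<ge> 2" by (auto simp: VV_def)
    hence "Phi T d w + 1 = card ?K + ?S" using phi_decomp[OF d, of T w] True by simp
    thus ?thesis using A by (simp add: algebra_simps)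
  next
    case False
    hence P: "Phi T d w = ?S" using phi_decomp[OF d, of T w] by simp
    show ?thesis
    proof (cases "?K = {}")
      case True thus ?thesis using P less.prems by simp
    next
      case False
      hence "card ?K \<ge> 1" using finK by (simp add: Suc_leI card_gt_0_iff)
      hence "d \<le> d * card ?K" by simp
      moreover have "d * (?S + 1) = d * ?S + d" by simp
      ultimately have "d * (?S + 1) \<le> card (occ T w)" using A by linarith
      thus ?thesis using P by simp
    qed
  qed
qed

lemma leaf_suffix:
  assumes "st_leaf T q" shows "suffix q T"
proof (rule ccontr)
  assume ns: "\<not> suffix q T"
  have node: "st_node T q" and nox: "\<not> (\<exists>r. st_node T r \<and> strict_prefix q r)"
    using assms by (auto simp: st_leaf_def)
  have "q \<noteq> []" using ns by auto
  hence "right_maximal T q" using node ns unfolding st_node_def by blast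
  then obtain a where "sublist (q @ [a]) T" by (auto simp: right_maximal_def)
  then obtain p s where T: "T = p @ (q @ [a]) @ s" by (auto simp: sublist_def)
  let ?r = "q @ [a] @ s"
  have "suffix ?r T" using T unfolding suffix_def by auto
  hence "st_node T ?r" by (auto simp: st_node_def)
  moreover have "strict_prefix q ?r" by (auto simp: strict_prefix_def)
  ultimately show False using nox by blast
qed

lemma locus_prefix:
  assumes "sublist s T" "s \<noteq> []"
  shows "prefix s (locus T s)"
proof -
  obtain p r where T: "T = p @ s @ r" using assms by (auto simp: sublist_def)
  have "suffix (s @ r) T" using T unfolding suffix_def by auto
  hence P0: "st_node T (s @ r) \<and> prefix s (s @ r)" using assms by (auto simp: st_node_def)
  obtain u where "st_node T u \<and> prefix s u \<and>
     (\<forall>w. st_node T w \<and> prefix s w \<longrightarrow> length u \<le> length w)"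
    using ex_has_least_nat[of "\<lambda>u. st_node T u \<and> prefix s u", OF P0, of length] by blast
  hence "\<exists>u. st_node T u \<and> prefix s u \<and>
     (\<forall>w. st_node T w \<and> prefix s w \<longrightarrow> length u \<le> length w)" by blast
  from someI_ex[OF this] show ?thesis unfolding locus_def by blast
qed

lemma heavy_occ:
  assumes "heavy_wlink T d v c" shows "d \<le> card (occ T (c # v))"
proof -
  have sl: "sublist (c # v) T" and hd: "d \<le> leaf_desc T (locus T (c # v))"
    using assms by (auto simp: heavy_wlink_def wlink_def)
  have pl: "prefix (c # v) (locus T (c # v))" using locus_prefix[OF sl] by simp
  have "{q. st_leaf T q \<and> prefix (locus T (c # v)) q} \<subseteq> occ T (c # v)"
  proof
    fix q assume "q \<in> {q. st_leaf T q \<and> prefix (locus T (c # v)) q}"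
    hence q: "st_leaf T q" "prefix (locus T (c # v)) q" by auto
    have "suffix q T" using leaf_suffix[OF q(1)] .
    moreover have "prefix (c # v) q" using prefix_order.trans[OF pl q(2)] .
    ultimately show "q \<in> occ T (c # v)" by (simp add: occ_def)
  qed
  hence "leaf_desc T (locus T (c # v)) \<le> card (occ T (c # v))"
    unfolding leaf_desc_def by (rule card_mono[OF finite_occ])
  thus ?thesis using hd by simp
qed

lemma aux_nat: "(a::nat) \<le> b \<Longrightarrow> b = 2 * x \<Longrightarrow> x \<le> y \<Longrightarrow> a \<le> 2 * y"
  by linarith

lemma main_count:
  assumes d: "1 \<le> d" and dn: "d \<le> Suc (length T)"
  shows "d * card {(v, c). w_special T d v \<and> heavy_wlink T d v c} \<le> 2 * Suc (length T)"
proof -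
  let ?S = "{(v, c). w_special T d v \<and> heavy_wlink T d v c}"
  let ?S' = "Sigma (VV T d) (KK T d)"
  have sub: "?S \<subseteq> ?S'"
  proof
    fix x assume "x \<in> ?S"
    then obtain v c where x: "x = (v, c)" and ws: "w_special T d v" and hw: "heavy_wlink T d v c" by auto
    obtain c1 c2 where "c1 \<noteq> c2" "heavy_wlink T d v c1" "heavy_wlink T d v c2"
      using ws by (auto simp: w_special_def)
    hence "{c1, c2} \<subseteq> KK T d v" using heavy_occ by (auto simp: KK_def)
    hence "card {c1, c2} \<le> card (KK T d v)" using finite_KK[OF d] card_mono by blast
    hence "v \<in> VV T d" using \<open>c1 \<noteq> c2\<close> by (auto simp: VV_def)
    moreover have "c \<in> KK T d v" using hw heavy_occ by (auto simp: KK_def)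
    ultimately show "x \<in> ?S'" using x by auto
  qed
  have finS': "finite ?S'" using finite_VV[OF d] finite_KK[OF d] by auto
  have "card ?S \<le> card ?S'" using card_mono[OF finS' sub] .
  also have "card ?S' = (\<Sum>v\<in>VV T d. card (KK T d v))"
    using finite_VV[OF d] finite_KK[OF d] by (simp add: card_SigmaI)
  also have "\<dots> \<le> (\<Sum>v\<in>VV T d. 2 * (card (KK T d v) - 1))"
    by (rule sum_mono) (auto simp: VV_def)
  also have "\<dots> = 2 * Phi T d []"
    unfolding Phi_def by (simp add: sum_distrib_left)
  finally have c1: "card ?S \<le> 2 * Phi T d []" .
  have occ0: "occ T [] = set (suffixes T)" by (auto simp: occ_def)
  have "d * (Phi T d [] + 1) \<le> card (occ T [])"
    by (rule phi_bound[OF d]) (use dn occ0 in simp)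
  hence "d * Phi T d [] \<le> Suc (length T)" using occ0 by (simp add: algebra_simps)
  hence "d * card ?S \<le> d * (2 * Phi T d [])" using c1 by simp
  moreover have "d * (2 * Phi T d []) = 2 * (d * Phi T d [])" by simp
  ultimately show ?thesis using \<open>d * Phi T d [] \<le> Suc (length T)\<close> by (rule aux_nat)
qed

theorem proposition4:
  shows "\<exists>C::real. C > 0 \<and> (\<forall>T::nat list. \<forall>n d.
           unique_terminator T \<longrightarrow> n = length T \<longrightarrow> n \<ge> 2 \<longrightarrow>
           d = nat \<lceil>log 2 (real n)\<rceil> \<longrightarrow>
           real (card {(v, c). w_special T d v \<and> heavy_wlink T d v c})
             \<le> C * real n / real d)"
proof (intro exI[of _ 3] conjI allI impI)
  fix T :: "nat list" and n d
  assume n: "n = length T" "n \<ge> 2" and dd: "d = nat \<lceil>log 2 (real n)\<rceil>"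
  have "log 2 2 \<le> log 2 (real n)" using n by (subst log_le_cancel_iff) auto
  hence "log 2 (real n) \<ge> 1" by simp
  hence d1: "1 \<le> d" using dd by linarith
  have "real n < 2 powr real n"
  proof -
    have "n < 2 ^ n" by (rule less_exp)
    hence "real n < 2 ^ n" by (metis of_nat_less_iff of_nat_numeral of_nat_power)
    thus ?thesis by (simp add: powr_realpow)
  qed
  hence "log 2 (real n) < real n" using n by (subst log_less_iff) auto
  hence dn: "d \<le> n" using dd by linarith
  let ?c = "card {(v, c). w_special T d v \<and> heavy_wlink T d v c}"
  have "d * ?c \<le> 2 * Suc n" using main_count[OF d1] dn n by simp
  hence "real d * real ?c \<le> 3 * real n" using n(2) by (simp flip: of_nat_mult)
  hence "real ?c \<le> 3 * real n / real d" using d1 by (simp add: field_simps)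
  thus "real ?c \<le> 3 * real n / real d" .
qed simp

end
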